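(* Let $U_1,\dots,U_n$ be unitary operators on a Hilbert space and let ${\bf U}=U_n U_{n-1}\cdots U_1$. Suppose each $U_i$ is split as $U_i=G_i+B_i$, where $G_i,B_i$ are bounded operators (not necessarily unitary) with $\|B_i\|\le\epsilon$, so that $\|G_i\|\le 1+\epsilon$. Fix an integer $1\le k\le n$. Expanding the product ${\bf U}=\prod_{i}(G_i+B_i)$ into the $2^n$ ordered products, let ${\bf B}$ be the sum of all those products that contain at least $k$ factors of the form $B_i$, and ${\bf G}={\bf U}-{\bf B}$. Then $$\|{\bf B}\|\le \binom{n}{k}\epsilon^k(1+\epsilon)^{n-k}.$$ If moreover every $G_i$ is unitary, then $$\|{\bf B}\|\le \binom{n}{k}\epsilon^k.$$
   Context: $\|\cdot\|$ denotes the operator norm $\|A\|=\max_{\|\psi\|=1}\|A\psi\|$. *)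

theory Defs
  imports "HOL-Analysis.Analysis"
begin

text \<open>A unitary operator on a (real) Hilbert space: a bounded linear operator
  that is a surjective isometry (equivalently U* U = U U* = I).\<close>
definition unitary_op :: "('a::{real_inner,complete_space} \<Rightarrow>\<^sub>L 'a) \<Rightarrow> bool" where
  "unitary_op U \<longleftrightarrow> (\<forall>x. norm (blinfun_apply U x) = norm x) \<and> surj (blinfun_apply U)"

fun ord_prod :: "(nat \<Rightarrow> ('a::real_normed_vector \<Rightarrow>\<^sub>L 'a)) \<Rightarrow> nat \<Rightarrow> ('a \<Rightarrow>\<^sub>L 'a)" where
  "ord_prod F 0 = id_blinfun"
| "ord_prod F (Suc m) = F (Suc m) o\<^sub>L ord_prod F m"

text \<open>Sum of all ordered products in the expansion of prod_i (G i + B i), i = 1..n,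
  that contain at least k factors B i. S is the set of positions where B is chosen.\<close>
definition bad_part :: "(nat \<Rightarrow> ('a::real_normed_vector \<Rightarrow>\<^sub>L 'a)) \<Rightarrow> (nat \<Rightarrow> ('a \<Rightarrow>\<^sub>L 'a)) \<Rightarrow> nat \<Rightarrow> nat \<Rightarrow> ('a \<Rightarrow>\<^sub>L 'a)" where
  "bad_part G B n k = (\<Sum>S\<in>{S. S \<subseteq> {1..n} \<and> k \<le> card S}.
       ord_prod (\<lambda>i. if i \<in> S then B i else G i) n)"

end

theory Submission
  imports Defs
begin

lemma ord_prod_cong:
  "(\<And>i. i \<in> {1..n} \<Longrightarrow> F i = F' i) \<Longrightarrow> ord_prod F n = ord_prod F' n"
  by (induction n) auto

lemma compose_sum_right:
  "finite A \<Longrightarrow> (X :: 'a::real_normed_vector \<Rightarrow>\<^sub>L 'a) o\<^sub>L (\<Sum>T\<in>A. f T) = (\<Sum>T\<in>A. X o\<^sub>L f T)"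
  by (induction A rule: finite_induct)
     (auto simp: bounded_bilinear.add_right[OF bounded_bilinear_blinfun_compose])

lemma bad_part_rec:
  "bad_part G B (Suc n) k = (B (Suc n) o\<^sub>L bad_part G B n (k - 1)) + (G (Suc n) o\<^sub>L bad_part G B n k)"
proof -
  define A1 where "A1 = {T. T \<subseteq> {1..n} \<and> k - 1 \<le> card T}"
  define A2 where "A2 = {T. T \<subseteq> {1..n} \<and> k \<le> card T}"
  define F where "F = (\<lambda>S i. if i \<in> S then B i else G i)"
  have fin1: "finite A1" unfolding A1_def by (rule finite_subset[of _ "Pow {1..n}"]) auto
  have fin2: "finite A2" unfolding A2_def by (rule finite_subset[of _ "Pow {1..n}"]) auto
  have eq: "{S. S \<subseteq> {1..Suc n} \<and> k \<le> card S} = insert (Suc n) ` A1 \<union> A2"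
  proof (intro equalityI subsetI)
    fix S assume "S \<in> {S. S \<subseteq> {1..Suc n} \<and> k \<le> card S}"
    hence S: "S \<subseteq> {1..Suc n}" "k \<le> card S" by auto
    have finS: "finite S" using S(1) finite_subset by blast
    show "S \<in> insert (Suc n) ` A1 \<union> A2"
    proof (cases "Suc n \<in> S")
      case True
      have "S = insert (Suc n) (S - {Suc n})" using True by auto
      moreover have "S - {Suc n} \<in> A1" unfolding A1_def using S True finS
        by (auto simp: card_Diff_singleton)
      ultimately show ?thesis by blast
    next
      case False
      have "S \<subseteq> {1..n}" using S False by (fastforce simp: le_Suc_eq)
      hence "S \<in> A2" unfolding A2_def using S by auto
      thus ?thesis by blast
    qed
  next
    fix S assume "S \<in> insert (Suc n) ` A1 \<union> A2"
    then show "S \<in> {S. S \<subseteq> {1..Suc n} \<and> k \<le> card S}"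
    proof
      assume "S \<in> insert (Suc n) ` A1"
      then obtain T where T: "T \<in> A1" "S = insert (Suc n) T" by blast
      have "finite T" "Suc n \<notin> T" using T(1) finite_subset[of T "{1..n}"] unfolding A1_def by auto
      thus ?thesis using T unfolding A1_def by auto
    next
      assume "S \<in> A2" thus ?thesis unfolding A2_def by auto
    qed
  qed
  have disj: "insert (Suc n) ` A1 \<inter> A2 = {}" unfolding A2_def by auto
  have inj: "inj_on (insert (Suc n)) A1"
  proof (rule inj_onI)
    fix x y assume "x \<in> A1" "y \<in> A1" "insert (Suc n) x = insert (Suc n) y"
    moreover have "Suc n \<notin> x" "Suc n \<notin> y" using \<open>x \<in> A1\<close> \<open>y \<in> A1\<close> unfolding A1_def by auto
    ultimately show "x = y" by (metis Diff_insert_absorb)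
  qed
  have p1: "ord_prod (F (insert (Suc n) T)) (Suc n) = B (Suc n) o\<^sub>L ord_prod (F T) n"
    if "T \<in> A1" for T
  proof -
    have "ord_prod (F (insert (Suc n) T)) n = ord_prod (F T) n"
      by (rule ord_prod_cong) (auto simp: F_def)
    thus ?thesis by (simp add: F_def)
  qed
  have p2: "ord_prod (F T) (Suc n) = G (Suc n) o\<^sub>L ord_prod (F T) n"
    if "T \<in> A2" for T
    using that by (auto simp: F_def A2_def)
  have "bad_part G B (Suc n) k = (\<Sum>S\<in>insert (Suc n) ` A1 \<union> A2. ord_prod (F S) (Suc n))"
    unfolding bad_part_def eq F_def ..
  also have "\<dots> = (\<Sum>S\<in>insert (Suc n) ` A1. ord_prod (F S) (Suc n)) + (\<Sum>S\<in>A2. ord_prod (F S) (Suc n))"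
    by (rule sum.union_disjoint) (use fin1 fin2 disj in auto)
  also have "(\<Sum>S\<in>insert (Suc n) ` A1. ord_prod (F S) (Suc n)) = (\<Sum>T\<in>A1. B (Suc n) o\<^sub>L ord_prod (F T) n)"
    by (subst sum.reindex[OF inj]) (auto intro!: sum.cong simp only: p1 o_def)
  also have "\<dots> = B (Suc n) o\<^sub>L bad_part G B n (k - 1)"
    unfolding bad_part_def A1_def F_def by (rule compose_sum_right[symmetric]) (use fin1 in \<open>simp add: A1_def\<close>)
  also have "(\<Sum>S\<in>A2. ord_prod (F S) (Suc n)) = (\<Sum>T\<in>A2. G (Suc n) o\<^sub>L ord_prod (F T) n)"
    by (rule sum.cong) (rule refl, erule p2)
  also have "\<dots> = G (Suc n) o\<^sub>L bad_part G B n k"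
    unfolding bad_part_def A2_def F_def by (rule compose_sum_right[symmetric]) (use fin2 in \<open>simp add: A2_def\<close>)
  finally show ?thesis .
qed

lemma bad_part_0: "bad_part G B 0 k = (if k = 0 then id_blinfun else 0)"
proof -
  have "{S. S \<subseteq> {1..(0::nat)} \<and> k \<le> card S} = (if k = 0 then {{}} else {})" by auto
  thus ?thesis unfolding bad_part_def by auto
qed

lemma binom_arith:
  fixes e g :: real and n k :: nat
  assumes "0 \<le> e" "1 \<le> g" "1 \<le> k"
  shows "e * (real (n choose (k - 1)) * e ^ (k - 1) * g ^ (n - (k - 1)))
       + g * (real (n choose k) * e ^ k * g ^ (n - k))
       \<le> real (Suc n choose k) * e ^ k * g ^ (Suc n - k)"
proof -
  obtain j where j: "k = Suc j" using assms(3) by (cases k) auto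
  show ?thesis
  proof (cases "k \<le> n")
    case True
    have "n - (k - 1) = Suc (n - k)" using True j by auto
    hence "e * (real (n choose (k - 1)) * e ^ (k - 1) * g ^ (n - (k - 1)))
       + g * (real (n choose k) * e ^ k * g ^ (n - k))
       = (real (n choose j) + real (n choose k)) * e ^ k * g ^ (Suc n - k)"
      using True j by (simp add: algebra_simps Suc_diff_le)
    also have "\<dots> = real (Suc n choose k) * e ^ k * g ^ (Suc n - k)"
      using j by simp
    finally show ?thesis by simp
  next
    case False
    hence "n choose k = 0" by simp
    moreover have "n - (k - 1) = 0" "Suc n - k = 0" using False j by auto
    moreover have "n choose (k - 1) \<le> Suc n choose k"
      using False j by (cases "j = n") auto
    ultimately have "e * (real (n choose (k - 1)) * e ^ (k - 1) * g ^ (n - (k - 1)))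
       + g * (real (n choose k) * e ^ k * g ^ (n - k)) = real (n choose (k - 1)) * e ^ k"
      using j by simp
    also have "\<dots> \<le> real (Suc n choose k) * e ^ k"
      using \<open>n choose (k - 1) \<le> Suc n choose k\<close> assms(1) by (intro mult_right_mono) auto
    finally show ?thesis using \<open>Suc n - k = 0\<close> by simp
  qed
qed

lemma bad_bound:
  fixes U G B :: "nat \<Rightarrow> ('a::real_normed_vector \<Rightarrow>\<^sub>L 'a)"
  assumes "\<And>i. i \<in> {1..n} \<Longrightarrow> norm (G i + B i) \<le> 1"
    and "\<And>i. i \<in> {1..n} \<Longrightarrow> norm (B i) \<le> e"
    and "\<And>i. i \<in> {1..n} \<Longrightarrow> norm (G i) \<le> g"
    and "0 \<le> e" "1 \<le> g"
  shows "norm (bad_part G B n k) \<le> real (n choose k) * e ^ k * g ^ (n - k)"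
  using assms(1-3)
proof (induction n arbitrary: k)
  case 0
  then show ?case using assms(4) by (auto simp: bad_part_0 norm_blinfun_id_le)
next
  case (Suc n)
  have IH: "norm (bad_part G B n k') \<le> real (n choose k') * e ^ k' * g ^ (n - k')" for k'
    using Suc.IH Suc.prems by auto
  have hB: "norm (B (Suc n)) \<le> e" and hG: "norm (G (Suc n)) \<le> g" and hU: "norm (G (Suc n) + B (Suc n)) \<le> 1"
    using Suc.prems by auto
  show ?case
  proof (cases "k = 0")
    case True
    have "bad_part G B (Suc n) k = (G (Suc n) + B (Suc n)) o\<^sub>L bad_part G B n 0"
    proof -
      have "(G (Suc n) + B (Suc n)) o\<^sub>L bad_part G B n 0 = (G (Suc n) o\<^sub>L bad_part G B n 0) + (B (Suc n) o\<^sub>L bad_part G B n 0)"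
        by (rule bounded_bilinear.add_left[OF bounded_bilinear_blinfun_compose])
      thus ?thesis using True by (simp add: bad_part_rec add.commute)
    qed
    also have "norm \<dots> \<le> 1 * norm (bad_part G B n 0)"
      by (rule order_trans[OF norm_blinfun_compose]) (intro mult_right_mono hU, simp)
    also have "\<dots> \<le> g ^ n" using IH[of 0] by simp
    also have "\<dots> \<le> g ^ Suc n" using assms(5) by simp
    finally show ?thesis using True by simp
  next
    case False
    have "norm (bad_part G B (Suc n) k) \<le> norm (B (Suc n) o\<^sub>L bad_part G B n (k - 1)) + norm (G (Suc n) o\<^sub>L bad_part G B n k)"
      unfolding bad_part_rec by (rule norm_triangle_ineq)
    also have "\<dots> \<le> e * (real (n choose (k - 1)) * e ^ (k - 1) * g ^ (n - (k - 1)))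
       + g * (real (n choose k) * e ^ k * g ^ (n - k))"
      apply (intro add_mono order_trans[OF norm_blinfun_compose] mult_mono hB hG IH)
      using assms(4,5) by auto
    also have "\<dots> \<le> real (Suc n choose k) * e ^ k * g ^ (Suc n - k)"
      using binom_arith[OF assms(4,5)] False by simp
    finally show ?thesis .
  qed
qed

lemma unitary_norm:
  assumes "unitary_op (U :: 'a::{real_inner,complete_space} \<Rightarrow>\<^sub>L 'a)"
  shows "norm U \<le> 1"
  using assms unfolding unitary_op_def by (intro norm_blinfun_bound) auto

theorem lemma1:
  fixes U G B :: "nat \<Rightarrow> ('a::{real_inner,complete_space} \<Rightarrow>\<^sub>L 'a)"
    and n k :: nat and \<epsilon> :: real
  assumes unitary: "\<And>i. i \<in> {1..n} \<Longrightarrow> unitary_op (U i)"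
    and split: "\<And>i. i \<in> {1..n} \<Longrightarrow> U i = G i + B i"
    and small: "\<And>i. i \<in> {1..n} \<Longrightarrow> norm (B i) \<le> \<epsilon>"
    and k: "1 \<le> k" "k \<le> n"
  shows "norm (bad_part G B n k) \<le> real (n choose k) * \<epsilon> ^ k * (1 + \<epsilon>) ^ (n - k)
     \<and> ((\<forall>i\<in>{1..n}. unitary_op (G i)) \<longrightarrow> norm (bad_part G B n k) \<le> real (n choose k) * \<epsilon> ^ k)"
proof -
  have "1 \<in> {1..n}" using k by simp
  hence e0: "0 \<le> \<epsilon>" using small[of 1] norm_ge_zero[of "B 1"] by linarith
  have hU: "norm (G i + B i) \<le> 1" if "i \<in> {1..n}" for i
    using unitary_norm[OF unitary[OF that]] split[OF that] by simp
  have hG: "norm (G i) \<le> 1 + \<epsilon>" if "i \<in> {1..n}" for i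
  proof -
    have "G i = (G i + B i) - B i" by simp
    hence "norm (G i) \<le> norm (G i + B i) + norm (B i)" by (metis norm_triangle_ineq4)
    thus ?thesis using hU[OF that] small[OF that] by simp
  qed
  have A: "norm (bad_part G B n k) \<le> real (n choose k) * \<epsilon> ^ k * (1 + \<epsilon>) ^ (n - k)"
    by (rule bad_bound[OF hU small hG e0]) (use e0 in auto)
  have B: "norm (bad_part G B n k) \<le> real (n choose k) * \<epsilon> ^ k"
    if "\<forall>i\<in>{1..n}. unitary_op (G i)"
  proof -
    have "norm (bad_part G B n k) \<le> real (n choose k) * \<epsilon> ^ k * 1 ^ (n - k)"
      by (rule bad_bound) (use hU small unitary_norm that e0 in force)+
    thus ?thesis by simp
  qed
  show ?thesis using A B by blast
qed

end
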